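(* Let $G$ be a finite group, $V$ a real finite-dimensional orthogonal representation of $G$, and let $f\in\mathcal{C}_G(V)$ be standard with respect to $x_0$, $U$ and $\epsilon$, where $H=G_{x_0}$. For $g\in G$ put $K=G_{gx_0}=gHg^{-1}$; then $gU$ is an open subset of $V_K$ and $f$ restricts to a map $f_{gx_0}=f|_{gU}\colon gU\to V^K$ (so that $f_{gx_0}(y)=gf(g^{-1}y)$). Then for each $g\in G$, \[ \deg(f_{gx_0},gU)=\deg(f|_U,U), \] where $\deg$ denotes the Brouwer degree (with respect to $0$) of a map from an open subset of a finite-dimensional space into that space (here $V^H$, resp. $V^K$).
   Context: $\mathcal{C}_G(V)$ is the set of continuous equivariant maps $f\colon D_f\to V$ with $D_f$ open $G$-invariant in $V$ and $f^{-1}(0)$ compact. For a subgroup $H$, $G_x=\{g: gx=x\}$, $V^H=\{x\in V: H\subset G_x\}$ (a linear subspace), $V_H=\{x\in V: G_x=H\}$ (open in $V^H$), and $(V^H)^\perp$ is the orthogonal complement. For $U$ open in $V_H$ and $\epsilon>0$, $U^\epsilon=\{x+v: x\in U, v\in (V^H)^\perp, |v|<\epsilon\}$. A map $f\in\mathcal{C}_G(V)$ is standard with respect to $x_0\in D_f$, an open subset $U\subset V_H$ with $H=G_{x_0}$, and $\epsilon>0$ if: $f^{-1}(0)=Gx_0$, $f^{-1}(0)\cap U=\{x_0\}$, $U^\epsilon\subset D_f$, and $f(x+v)=f(x)+v$ for all $x\in U$, $v\in(V^H)^\perp$, $|v|<\epsilon$. By equivariance $f$ maps $V_H\cap D_f$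 into $V^H$. *)

theory Defs
  imports "HOL-Analysis.Analysis" "HOL-Homology.Homology" "HOL-Algebra.Group"
begin

definition orth_rep :: "('g, 'b) monoid_scheme \<Rightarrow> ('g \<Rightarrow> 'v::euclidean_space \<Rightarrow> 'v) \<Rightarrow> bool" where
  "orth_rep G \<rho> \<longleftrightarrow> group G \<and> finite (carrier G)
     \<and> (\<forall>g\<in>carrier G. orthogonal_transformation (\<rho> g))
     \<and> (\<forall>g\<in>carrier G. \<forall>h\<in>carrier G. \<rho> (g \<otimes>\<^bsub>G\<^esub> h) = \<rho> g \<circ> \<rho> h)
     \<and> \<rho> \<one>\<^bsub>G\<^esub> = id"

definition stab :: "('g, 'b) monoid_scheme \<Rightarrow> ('g \<Rightarrow> 'v \<Rightarrow> 'v) \<Rightarrow> 'v \<Rightarrow> 'g set" where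
  "stab G \<rho> x = {g \<in> carrier G. \<rho> g x = x}"

definition fixsp :: "('g, 'b) monoid_scheme \<Rightarrow> ('g \<Rightarrow> 'v \<Rightarrow> 'v) \<Rightarrow> 'g set \<Rightarrow> 'v set" where
  "fixsp G \<rho> H = {x. H \<subseteq> stab G \<rho> x}"

definition orbtype :: "('g, 'b) monoid_scheme \<Rightarrow> ('g \<Rightarrow> 'v \<Rightarrow> 'v) \<Rightarrow> 'g set \<Rightarrow> 'v set" where
  "orbtype G \<rho> H = {x. stab G \<rho> x = H}"

definition thicken :: "('g, 'b) monoid_scheme \<Rightarrow> ('g \<Rightarrow> 'v::real_inner \<Rightarrow> 'v) \<Rightarrow> 'g set \<Rightarrow> 'v set \<Rightarrow> real \<Rightarrow> 'v set" where
  "thicken G \<rho> H U \<epsilon> = {x + v | x v. x \<in> U \<and> v \<in> orthogonal_comp (fixsp G \<rho> H) \<and> norm v < \<epsilon>}"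

definition in_CG :: "('g, 'b) monoid_scheme \<Rightarrow> ('g \<Rightarrow> 'v::euclidean_space \<Rightarrow> 'v) \<Rightarrow> 'v set \<Rightarrow> ('v \<Rightarrow> 'v) \<Rightarrow> bool" where
  "in_CG G \<rho> D f \<longleftrightarrow> open D \<and> (\<forall>g\<in>carrier G. \<rho> g ` D \<subseteq> D) \<and> continuous_on D f
     \<and> (\<forall>g\<in>carrier G. \<forall>x\<in>D. f (\<rho> g x) = \<rho> g (f x))
     \<and> compact {x\<in>D. f x = 0}"

definition standard :: "('g, 'b) monoid_scheme \<Rightarrow> ('g \<Rightarrow> 'v::euclidean_space \<Rightarrow> 'v) \<Rightarrow> 'v set \<Rightarrow> ('v \<Rightarrow> 'v)
    \<Rightarrow> 'v \<Rightarrow> 'v set \<Rightarrow> real \<Rightarrow> bool" where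
  "standard G \<rho> D f x0 U \<epsilon> \<longleftrightarrow>
     x0 \<in> D \<and> \<epsilon> > 0
     \<and> openin (top_of_set (orbtype G \<rho> (stab G \<rho> x0))) U
     \<and> {x\<in>D. f x = 0} = (\<lambda>g. \<rho> g x0) ` carrier G
     \<and> {x\<in>D. f x = 0} \<inter> U = {x0}
     \<and> thicken G \<rho> (stab G \<rho> x0) U \<epsilon> \<subseteq> D
     \<and> (\<forall>x\<in>U. \<forall>v\<in>orthogonal_comp (fixsp G \<rho> (stab G \<rho> x0)). norm v < \<epsilon> \<longrightarrow> f (x + v) = f x + v)"

text \<open>Brouwer degree (with respect to 0) of f : U \<rightarrow> W, U open in the linear subspace W,
  zero set K = {x \<in> U. f x = 0} compact, defined homologically with n = dim W:
  for a ball B = cball 0 r with K \<subseteq> ball 0 r and any class z in H_n(W, W - B), let u be the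
  class in H_n(U, U - K) corresponding under the excision isomorphism to the image of z
  in H_n(W, W - K); then f_* u = d \<cdot> (image of z in H_n(W, W - {0})).  The degree is this d.
  (The same orientation is used on domain and target, so no orientation choice is needed.)\<close>
definition local_degree :: "'v::euclidean_space set \<Rightarrow> 'v set \<Rightarrow> ('v \<Rightarrow> 'v) \<Rightarrow> int" where
  "local_degree W U f = (THE d::int. \<forall>r z u.
      let K = {x\<in>U. f x = 0}; n = int (dim W); X = top_of_set W in
      K \<subseteq> ball 0 r
      \<and> z \<in> carrier (relative_homology_group n X (W - cball 0 r))
      \<and> u \<in> carrier (relative_homology_group n (top_of_set U) (U - K))
      \<and> hom_induced n (top_of_set U) (U - K) X (W - K) id u
          = hom_induced n X (W - cball 0 r) X (W - K) id z
      \<longrightarrow> hom_induced n (top_of_set U) (U - K) X (W - {0}) f u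
          = pow (relative_homology_group n X (W - {0}))
                (hom_induced n X (W - cball 0 r) X (W - {0}) id z) d)"

end

theory Submission
  imports Defs
begin

definition ldP :: "'v::euclidean_space set \<Rightarrow> 'v set \<Rightarrow> ('v \<Rightarrow> 'v) \<Rightarrow> int \<Rightarrow> bool" where
  "ldP W U f d = (\<forall>r z u.
      let K = {x\<in>U. f x = 0}; n = int (dim W); X = top_of_set W in
      K \<subseteq> ball 0 r
      \<and> z \<in> carrier (relative_homology_group n X (W - cball 0 r))
      \<and> u \<in> carrier (relative_homology_group n (top_of_set U) (U - K))
      \<and> hom_induced n (top_of_set U) (U - K) X (W - K) id u
          = hom_induced n X (W - cball 0 r) X (W - K) id z
      \<longrightarrow> hom_induced n (top_of_set U) (U - K) X (W - {0}) f u
          = pow (relative_homology_group n X (W - {0}))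
                (hom_induced n X (W - cball 0 r) X (W - {0}) id z) d)"

lemma local_degree_ldP: "local_degree W U f = (THE d. ldP W U f d)"
  unfolding local_degree_def ldP_def by simp

lemma ldP_iff: "ldP W U f d \<longleftrightarrow> (\<forall>r z u.
      {x\<in>U. f x = 0} \<subseteq> ball 0 r
      \<and> z \<in> carrier (relative_homology_group (int (dim W)) (top_of_set W) (W - cball 0 r))
      \<and> u \<in> carrier (relative_homology_group (int (dim W)) (top_of_set U) (U - {x\<in>U. f x = 0}))
      \<and> hom_induced (int (dim W)) (top_of_set U) (U - {x\<in>U. f x = 0}) (top_of_set W) (W - {x\<in>U. f x = 0}) id u
          = hom_induced (int (dim W)) (top_of_set W) (W - cball 0 r) (top_of_set W) (W - {x\<in>U. f x = 0}) id z
      \<longrightarrow> hom_induced (int (dim W)) (top_of_set U) (U - {x\<in>U. f x = 0}) (top_of_set W) (W - {0}) f u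
          = pow (relative_homology_group (int (dim W)) (top_of_set W) (W - {0}))
                (hom_induced (int (dim W)) (top_of_set W) (W - cball 0 r) (top_of_set W) (W - {0}) id z) d)"
  unfolding ldP_def Let_def by simp

lemma transport_dir:
  fixes T S f :: "'v::euclidean_space \<Rightarrow> 'v"
  assumes contT: "continuous_on W1 T" and TW: "T \<in> W1 \<rightarrow> W2" and normT: "\<And>x. norm (T x) = norm x"
  and contS: "continuous_on W2 S" and SW: "S \<in> W2 \<rightarrow> W1" and normS: "\<And>x. norm (S x) = norm x"
  and SU: "S \<in> U2 \<rightarrow> U1" and TU: "T \<in> U1 \<rightarrow> U2"
  and ST: "\<And>x. x \<in> W1 \<Longrightarrow> S (T x) = x" and TS: "\<And>y. y \<in> W2 \<Longrightarrow> T (S y) = y"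
  and U1W: "U1 \<subseteq> W1" and U2W: "U2 \<subseteq> W2"
  and contf: "continuous_on U1 f" and fU: "f \<in> U1 \<rightarrow> W1"
  and conj: "\<And>y. y \<in> U2 \<Longrightarrow> T (f (S y)) = f y"
  and dimeq: "dim W1 = dim W2"
  and ne: "\<exists>y\<in>U2. f y = 0"
  and P1: "ldP W1 U1 f d"
  shows "ldP W2 U2 f d"
  unfolding ldP_iff
proof (intro allI impI, elim conjE)
  fix r z u
  define n where "n = int (dim W2)"
  define K1 where "K1 = {x\<in>U1. f x = 0}"
  define K2 where "K2 = {x\<in>U2. f x = 0}"
  define X1 where "X1 = top_of_set W1"
  define X2 where "X2 = top_of_set W2"
  assume K2b: "{x\<in>U2. f x = 0} \<subseteq> ball 0 r"
    and zc: "z \<in> carrier (relative_homology_group (int (dim W2)) (top_of_set W2) (W2 - cball 0 r))"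
    and uc: "u \<in> carrier (relative_homology_group (int (dim W2)) (top_of_set U2) (U2 - {x\<in>U2. f x = 0}))"
    and eq: "hom_induced (int (dim W2)) (top_of_set U2) (U2 - {x\<in>U2. f x = 0}) (top_of_set W2) (W2 - {x\<in>U2. f x = 0}) id u
          = hom_induced (int (dim W2)) (top_of_set W2) (W2 - cball 0 r) (top_of_set W2) (W2 - {x\<in>U2. f x = 0}) id z"
  have T0: "T 0 = 0" using normT[of 0] by simp
  have r0: "0 \<le> r" using ne K2b by (auto dest!: subsetD) (smt (verit) norm_ge_zero)
  have K1b: "K1 \<subseteq> ball 0 r"
  proof
    fix x assume x: "x \<in> K1"
    then have x1: "x \<in> U1" "f x = 0" by (auto simp: K1_def)
    then have "T x \<in> U2" using TU by auto
    moreover have "f (T x) = 0" using conj[OF \<open>T x \<in> U2\<close>] ST[of x] U1W T0 x1 by auto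
    ultimately have "T x \<in> {x\<in>U2. f x = 0}" by simp
    then show "x \<in> ball 0 r" using K2b normT[of x] by auto
  qed
  have S1: "S \<in> (U2 - K2) \<rightarrow> (U1 - K1)"
  proof
    fix y assume y: "y \<in> U2 - K2"
    then have "S y \<in> U1" using SU by auto
    moreover have "f (S y) \<noteq> 0"
    proof
      assume "f (S y) = 0"
      then have "f y = 0" using conj[of y] y T0 by auto
      then show False using y by (auto simp: K2_def)
    qed
    ultimately show "S y \<in> U1 - K1" by (auto simp: K1_def)
  qed
  have S2: "S \<in> (W2 - K2) \<rightarrow> (W1 - K1)"
  proof
    fix y assume y: "y \<in> W2 - K2"
    show "S y \<in> W1 - K1"
    proof
      show "S y \<in> W1" using SW y by auto
      show "S y \<notin> K1"
      proof
        assume "S y \<in> K1"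
        then have a: "S y \<in> U1" "f (S y) = 0" by (auto simp: K1_def)
        have "y = T (S y)" using TS[of y] y by auto
        then have yU: "y \<in> U2" using TU a by (metis Pi_iff)
        then have "f y = 0" using conj[OF yU] a T0 by simp
        then show False using y yU by (auto simp: K2_def)
      qed
    qed
  qed
  have S3: "S \<in> (W2 - cball 0 r) \<rightarrow> (W1 - cball 0 r)" using SW normS by auto
  have T3: "T \<in> (W1 - {0}) \<rightarrow> (W2 - {0})" 
  proof
    fix x assume "x \<in> W1 - {0}"
    then show "T x \<in> W2 - {0}" using TW normT[of x] by (metis DiffD1 DiffD2 DiffI Pi_iff insertI1 norm_eq_zero singletonD)
  qed
  have f3: "f \<in> (U1 - K1) \<rightarrow> (W1 - {0})" using fU by (auto simp: K1_def)
  have i1: "id \<in> (U1 - K1) \<rightarrow> (W1 - K1)" "id \<in> (W1 - cball 0 r) \<rightarrow> (W1 - K1)"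
     "id \<in> (U2 - K2) \<rightarrow> (W2 - K2)" "id \<in> (W2 - cball 0 r) \<rightarrow> (W2 - K2)"
     "id \<in> (W1 - cball 0 r) \<rightarrow> (W1 - {0})" "id \<in> (W2 - cball 0 r) \<rightarrow> (W2 - {0})"
    using U1W U2W K1b K2b r0 by (auto simp: K1_def K2_def)
  have cSU: "continuous_map (top_of_set U2) (top_of_set U1) S"
    using SU contS U2W by (auto intro: continuous_on_subset)
  have cSW: "continuous_map X2 X1 S" using SW contS by (simp add: X1_def X2_def)
  have cTW: "continuous_map X1 X2 T" using TW contT by (simp add: X1_def X2_def)
  have cf: "continuous_map (top_of_set U1) X1 f" using fU contf by (simp add: X1_def)
  have ci1: "continuous_map (top_of_set U1) X1 id" using U1W by (auto simp: X1_def)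
  have ci2: "continuous_map (top_of_set U2) X2 id" using U2W by (auto simp: X2_def)
  have ci3: "continuous_map X1 X1 id" "continuous_map X2 X2 id" by auto
  define z1 where "z1 = hom_induced n X2 (W2 - cball 0 r) X1 (W1 - cball 0 r) S z"
  define u1 where "u1 = hom_induced n (top_of_set U2) (U2 - K2) (top_of_set U1) (U1 - K1) S u"
  have eq1: "hom_induced n (top_of_set U1) (U1 - K1) X1 (W1 - K1) id u1
           = hom_induced n X1 (W1 - cball 0 r) X1 (W1 - K1) id z1"
  proof -
    have "hom_induced n (top_of_set U1) (U1 - K1) X1 (W1 - K1) id u1
        = hom_induced n (top_of_set U2) (U2 - K2) X1 (W1 - K1) (id \<circ> S) u"
      unfolding u1_def by (rule hom_induced_compose'[OF cSU S1 ci1 i1(1)])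
    also have "\<dots> = hom_induced n (top_of_set U2) (U2 - K2) X1 (W1 - K1) (S \<circ> id) u" by simp
    also have "\<dots> = hom_induced n X2 (W2 - K2) X1 (W1 - K1) S (hom_induced n (top_of_set U2) (U2 - K2) X2 (W2 - K2) id u)"
      by (rule hom_induced_compose'[OF ci2 i1(3) cSW S2, symmetric])
    also have "\<dots> = hom_induced n X2 (W2 - K2) X1 (W1 - K1) S (hom_induced n X2 (W2 - cball 0 r) X2 (W2 - K2) id z)"
      using eq by (simp add: n_def X2_def K2_def)
    also have "\<dots> = hom_induced n X2 (W2 - cball 0 r) X1 (W1 - K1) (S \<circ> id) z"
      by (rule hom_induced_compose'[OF ci3(2) i1(4) cSW S2])
    also have "\<dots> = hom_induced n X2 (W2 - cball 0 r) X1 (W1 - K1) (id \<circ> S) z" by simp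
    also have "\<dots> = hom_induced n X1 (W1 - cball 0 r) X1 (W1 - K1) id z1"
      unfolding z1_def by (rule hom_induced_compose'[OF cSW S3 ci3(1) i1(2), symmetric])
    finally show ?thesis .
  qed
  have F1: "hom_induced n (top_of_set U1) (U1 - K1) X1 (W1 - {0}) f u1
          = pow (relative_homology_group n X1 (W1 - {0}))
                (hom_induced n X1 (W1 - cball 0 r) X1 (W1 - {0}) id z1) d"
    using P1[unfolded ldP_iff, rule_format, of r z1 u1] K1b eq1
    unfolding n_def X1_def K1_def z1_def u1_def dimeq
    by (simp add: hom_induced_carrier)
  define hT where "hT = hom_induced n X1 (W1 - {0}) X2 (W2 - {0}) T"
  have L: "hT (hom_induced n (top_of_set U1) (U1 - K1) X1 (W1 - {0}) f u1)
         = hom_induced n (top_of_set U2) (U2 - K2) X2 (W2 - {0}) f u"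
  proof -
    have cTf: "continuous_map (top_of_set U1) X2 (T \<circ> f)"
      using continuous_map_compose[OF cf cTW] .
    have Tf3: "T \<circ> f \<in> (U1 - K1) \<rightarrow> (W2 - {0})" using f3 T3 by auto
    have "hT (hom_induced n (top_of_set U1) (U1 - K1) X1 (W1 - {0}) f u1)
        = hom_induced n (top_of_set U1) (U1 - K1) X2 (W2 - {0}) (T \<circ> f) u1"
      unfolding hT_def by (rule hom_induced_compose'[OF cf f3 cTW T3])
    also have "\<dots> = hom_induced n (top_of_set U2) (U2 - K2) X2 (W2 - {0}) ((T \<circ> f) \<circ> S) u"
      unfolding u1_def by (rule hom_induced_compose'[OF cSU S1 cTf Tf3])
    also have "\<dots> = hom_induced n (top_of_set U2) (U2 - K2) X2 (W2 - {0}) f u"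
      by (rule arg_cong[where f="\<lambda>h. h u"], rule hom_induced_eq) (simp add: conj)
    finally show ?thesis .
  qed
  have R: "hT (hom_induced n X1 (W1 - cball 0 r) X1 (W1 - {0}) id z1)
         = hom_induced n X2 (W2 - cball 0 r) X2 (W2 - {0}) id z"
  proof -
    have "hT (hom_induced n X1 (W1 - cball 0 r) X1 (W1 - {0}) id z1)
        = hom_induced n X1 (W1 - cball 0 r) X2 (W2 - {0}) (T \<circ> id) z1"
      unfolding hT_def by (rule hom_induced_compose'[OF ci3(1) i1(5) cTW T3])
    also have "\<dots> = hom_induced n X2 (W2 - cball 0 r) X2 (W2 - {0}) ((T \<circ> id) \<circ> S) z"
      unfolding z1_def by (rule hom_induced_compose'[OF cSW S3]) (use cTW T3 i1(5) in auto)
    also have "\<dots> = hom_induced n X2 (W2 - cball 0 r) X2 (W2 - {0}) id z"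
      by (rule arg_cong[where f="\<lambda>h. h z"], rule hom_induced_eq) (simp add: TS X2_def)
    finally show ?thesis .
  qed
  have hom: "hT \<in> hom (relative_homology_group n X1 (W1 - {0})) (relative_homology_group n X2 (W2 - {0}))"
    unfolding hT_def by (rule hom_induced_hom)
  have gr: "group (relative_homology_group n X1 (W1 - {0}))" "group (relative_homology_group n X2 (W2 - {0}))"
    using abelian_relative_homology_group comm_group.axioms(2) by blast+
  have "hom_induced n (top_of_set U2) (U2 - K2) X2 (W2 - {0}) f u
      = hT (pow (relative_homology_group n X1 (W1 - {0}))
                (hom_induced n X1 (W1 - cball 0 r) X1 (W1 - {0}) id z1) d)"
    using L F1 by simp
  also have "\<dots> = pow (relative_homology_group n X2 (W2 - {0})) (hom_induced n X2 (W2 - cball 0 r) X2 (W2 - {0}) id z) d"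
  proof -
    have "hT (pow (relative_homology_group n X1 (W1 - {0}))
                (hom_induced n X1 (W1 - cball 0 r) X1 (W1 - {0}) id z1) d)
       = pow (relative_homology_group n X2 (W2 - {0})) (hT (hom_induced n X1 (W1 - cball 0 r) X1 (W1 - {0}) id z1)) d"
      by (rule hom_int_pow[OF hom hom_induced_carrier gr])
    then show ?thesis using R by simp
  qed
  finally show "hom_induced (int (dim W2)) (top_of_set U2) (U2 - {x\<in>U2. f x = 0}) (top_of_set W2) (W2 - {0}) f u
          = pow (relative_homology_group (int (dim W2)) (top_of_set W2) (W2 - {0}))
                (hom_induced (int (dim W2)) (top_of_set W2) (W2 - cball 0 r) (top_of_set W2) (W2 - {0}) id z) d"
    by (simp add: n_def X2_def K2_def)
qed

lemma transport_eq:
  fixes T S f :: "'v::euclidean_space \<Rightarrow> 'v"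
  assumes contT: "continuous_on W1 T" and TW: "T \<in> W1 \<rightarrow> W2" and normT: "\<And>x. norm (T x) = norm x"
  and contS: "continuous_on W2 S" and SW: "S \<in> W2 \<rightarrow> W1" and normS: "\<And>x. norm (S x) = norm x"
  and SU: "S \<in> U2 \<rightarrow> U1" and TU: "T \<in> U1 \<rightarrow> U2"
  and ST: "\<And>x. x \<in> W1 \<Longrightarrow> S (T x) = x" and TS: "\<And>y. y \<in> W2 \<Longrightarrow> T (S y) = y"
  and U1W: "U1 \<subseteq> W1" and U2W: "U2 \<subseteq> W2"
  and contf: "continuous_on U1 f" and fU: "f \<in> U1 \<rightarrow> W1"
  and contf2: "continuous_on U2 f" and fU2: "f \<in> U2 \<rightarrow> W2"
  and conj: "\<And>y. y \<in> U2 \<Longrightarrow> T (f (S y)) = f y"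
  and conj2: "\<And>x. x \<in> U1 \<Longrightarrow> S (f (T x)) = f x"
  and dimeq: "dim W1 = dim W2"
  and ne: "\<exists>y\<in>U2. f y = 0" and ne1: "\<exists>y\<in>U1. f y = 0"
  shows "local_degree W2 U2 f = local_degree W1 U1 f"
proof -
  have "ldP W2 U2 f = ldP W1 U1 f"
  proof
    fix d
    show "ldP W2 U2 f d = ldP W1 U1 f d"
    proof
      assume P: "ldP W1 U1 f d"
      show "ldP W2 U2 f d"
        by (rule transport_dir[where T=T and S=S and ?W1.0=W1 and ?W2.0=W2 and ?U1.0=U1 and ?U2.0=U2 and f=f])
          (insert assms P, assumption)+
    next
      assume P: "ldP W2 U2 f d"
      show "ldP W1 U1 f d"
        by (rule transport_dir[where T=S and S=T and ?W1.0=W2 and ?W2.0=W1 and ?U1.0=U2 and ?U2.0=U1 and f=f])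
          (insert assms P, simp_all)
    qed
  qed
  then show ?thesis by (simp add: local_degree_ldP)
qed

theorem proposition4p1:
  fixes G :: "('g, 'b) monoid_scheme"
    and \<rho> :: "'g \<Rightarrow> 'v::euclidean_space \<Rightarrow> 'v"
    and D :: "'v set" and f :: "'v \<Rightarrow> 'v"
    and x0 :: 'v and U :: "'v set" and \<epsilon> :: real and g :: 'g
  assumes "orth_rep G \<rho>"
    and "in_CG G \<rho> D f"
    and "standard G \<rho> D f x0 U \<epsilon>"
    and "g \<in> carrier G"
  shows "local_degree (fixsp G \<rho> (stab G \<rho> (\<rho> g x0))) (\<rho> g ` U) f
         = local_degree (fixsp G \<rho> (stab G \<rho> x0)) U f"
proof -
  have grp: "group G" and orth: "\<And>a. a \<in> carrier G \<Longrightarrow> orthogonal_transformation (\<rho> a)"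
    and mult: "\<And>a b. a \<in> carrier G \<Longrightarrow> b \<in> carrier G \<Longrightarrow> \<rho> (a \<otimes>\<^bsub>G\<^esub> b) = \<rho> a \<circ> \<rho> b"
    and one: "\<rho> \<one>\<^bsub>G\<^esub> = id"
    using assms(1) unfolding orth_rep_def by auto
  interpret group G by (rule grp)
  have gc: "g \<in> carrier G" by fact
  define gi where "gi = inv\<^bsub>G\<^esub> g"
  have gic: "gi \<in> carrier G" using gc by (simp add: gi_def)
  have mult': "\<And>a b x. a \<in> carrier G \<Longrightarrow> b \<in> carrier G \<Longrightarrow> \<rho> (a \<otimes>\<^bsub>G\<^esub> b) x = \<rho> a (\<rho> b x)"
    using mult by simp
  have ST: "\<And>x. \<rho> gi (\<rho> g x) = x"
    using mult'[OF gic gc] one gc by (simp add: gi_def)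
  have TS: "\<And>x. \<rho> g (\<rho> gi x) = x"
    using mult'[OF gc gic] one gc by (simp add: gi_def)
  have opD: "open D" and Dinv: "\<And>a. a \<in> carrier G \<Longrightarrow> \<rho> a ` D \<subseteq> D" and contfD: "continuous_on D f"
    and equiv: "\<And>a x. a \<in> carrier G \<Longrightarrow> x \<in> D \<Longrightarrow> f (\<rho> a x) = \<rho> a (f x)"
    using assms(2) unfolding in_CG_def by auto
  define H where "H = stab G \<rho> x0"
  define K where "K = stab G \<rho> (\<rho> g x0)"
  define W1 where "W1 = fixsp G \<rho> H"
  define W2 where "W2 = fixsp G \<rho> K"
  have st: "x0 \<in> D" "\<epsilon> > 0" "openin (top_of_set (orbtype G \<rho> H)) U"
     "{x\<in>D. f x = 0} \<inter> U = {x0}" "thicken G \<rho> H U \<epsilon> \<subseteq> D"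
    using assms(3) unfolding standard_def H_def by auto
  have UD: "U \<subseteq> D"
  proof
    fix x assume "x \<in> U"
    then have "x + 0 \<in> thicken G \<rho> H U \<epsilon>"
      unfolding thicken_def using st(2) by (fastforce simp: orthogonal_comp_def orthogonal_def)
    then show "x \<in> D" using st(5) by auto
  qed
  have Uo: "U \<subseteq> orbtype G \<rho> H" using st(3) by (simp add: openin_subset[of _ U, simplified] openin_imp_subset)
  have UW1: "U \<subseteq> W1" using Uo by (auto simp: W1_def orbtype_def fixsp_def)
  have x0U: "x0 \<in> U" "f x0 = 0" using st(4) by auto
  have lin: "\<And>a. a \<in> carrier G \<Longrightarrow> linear (\<rho> a)" using orth orthogonal_transformation_linear by blast
  have nrm: "\<And>a x. a \<in> carrier G \<Longrightarrow> norm (\<rho> a x) = norm x" using orth orthogonal_transformation_norm by blast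
  have cont: "\<And>a S. a \<in> carrier G \<Longrightarrow> continuous_on S (\<rho> a)"
    using lin by (simp add: linear_continuous_on linear_conv_bounded_linear[symmetric])
  have TW: "\<rho> g \<in> W1 \<rightarrow> W2"
  proof
    fix x assume x: "x \<in> W1"
    have "\<rho> k (\<rho> g x) = \<rho> g x" if k: "k \<in> K" for k
    proof -
      from k have kc: "k \<in> carrier G" and kx: "\<rho> k (\<rho> g x0) = \<rho> g x0" by (auto simp: K_def stab_def)
      have hc: "gi \<otimes>\<^bsub>G\<^esub> k \<otimes>\<^bsub>G\<^esub> g \<in> carrier G" using kc gc gic by auto
      have "\<rho> (gi \<otimes>\<^bsub>G\<^esub> k \<otimes>\<^bsub>G\<^esub> g) x0 = x0" using mult'[OF _ gc] mult'[OF gic kc] hc gic kc kx ST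
        by simp
      then have "gi \<otimes>\<^bsub>G\<^esub> k \<otimes>\<^bsub>G\<^esub> g \<in> H" using hc by (simp add: H_def stab_def)
      then have "\<rho> (gi \<otimes>\<^bsub>G\<^esub> k \<otimes>\<^bsub>G\<^esub> g) x = x" using x by (auto simp: W1_def fixsp_def stab_def)
      then have "\<rho> gi (\<rho> k (\<rho> g x)) = x" using mult'[OF _ gc] mult'[OF gic kc] gic kc by simp
      then have "\<rho> k (\<rho> g x) = \<rho> g x" using TS by metis
      then show ?thesis .
    qed
    then show "\<rho> g x \<in> W2" by (auto simp: W2_def fixsp_def stab_def K_def)
  qed
  have SW: "\<rho> gi \<in> W2 \<rightarrow> W1"
  proof
    fix y assume y: "y \<in> W2"
    have "\<rho> h (\<rho> gi y) = \<rho> gi y" if h: "h \<in> H" for h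
    proof -
      from h have hc: "h \<in> carrier G" and hx: "\<rho> h x0 = x0" by (auto simp: H_def stab_def)
      have kc: "g \<otimes>\<^bsub>G\<^esub> h \<otimes>\<^bsub>G\<^esub> gi \<in> carrier G" using hc gc gic by auto
      have "\<rho> (g \<otimes>\<^bsub>G\<^esub> h \<otimes>\<^bsub>G\<^esub> gi) (\<rho> g x0) = \<rho> g x0"
        using mult'[OF _ gic] mult'[OF gc hc] kc gc hc hx ST by simp
      then have "g \<otimes>\<^bsub>G\<^esub> h \<otimes>\<^bsub>G\<^esub> gi \<in> K" using kc by (simp add: K_def stab_def)
      then have "\<rho> (g \<otimes>\<^bsub>G\<^esub> h \<otimes>\<^bsub>G\<^esub> gi) y = y" using y by (auto simp: W2_def fixsp_def stab_def)
      then have "\<rho> g (\<rho> h (\<rho> gi y)) = y" using mult'[OF _ gic] mult'[OF gc hc] gc hc by simp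
      then show "\<rho> h (\<rho> gi y) = \<rho> gi y" using ST by metis
    qed
    then show "\<rho> gi y \<in> W1" by (auto simp: W1_def fixsp_def stab_def H_def)
  qed
  define U2 where "U2 = \<rho> g ` U"
  have U2W: "U2 \<subseteq> W2" using TW UW1 by (auto simp: U2_def)
  have U2D: "U2 \<subseteq> D" using Dinv[OF gc] UD by (auto simp: U2_def)
  have fU: "f \<in> U \<rightarrow> W1"
  proof
    fix x assume x: "x \<in> U"
    then have sx: "stab G \<rho> x = H" using Uo by (auto simp: orbtype_def)
    have "\<rho> h (f x) = f x" if "h \<in> H" for h
    proof -
      have "h \<in> carrier G" "\<rho> h x = x" using that sx by (auto simp: stab_def)
      then show ?thesis using equiv[of h x] x UD by auto
    qed
    then show "f x \<in> W1" by (auto simp: W1_def fixsp_def stab_def H_def)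
  qed
  have fU2: "f \<in> U2 \<rightarrow> W2"
  proof
    fix y assume "y \<in> U2"
    then obtain x where x: "x \<in> U" "y = \<rho> g x" by (auto simp: U2_def)
    then have "f y = \<rho> g (f x)" using equiv[OF gc] UD by auto
    then show "f y \<in> W2" using fU TW x by auto
  qed
  have dim1: "dim W2 \<le> dim W1"
  proof -
    have "W2 \<subseteq> \<rho> g ` W1" using SW TS by (auto intro!: image_eqI)
    then have "dim W2 \<le> dim (\<rho> g ` W1)" by (rule dim_subset)
    also have "\<dots> \<le> dim W1" by (rule dim_image_le[OF lin[OF gc]])
    finally show ?thesis .
  qed
  have dim2: "dim W1 \<le> dim W2"
  proof -
    have "W1 \<subseteq> \<rho> gi ` W2" using TW ST by (auto intro!: image_eqI)
    then have "dim W1 \<le> dim (\<rho> gi ` W2)" by (rule dim_subset)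
    also have "\<dots> \<le> dim W2" by (rule dim_image_le[OF lin[OF gic]])
    finally show ?thesis .
  qed
  have "local_degree W2 U2 f = local_degree W1 U f"
  proof (rule transport_eq[where T="\<rho> g" and S="\<rho> gi"])
    show "continuous_on W1 (\<rho> g)" "continuous_on W2 (\<rho> gi)" using cont gc gic by auto
    show "\<rho> g \<in> W1 \<rightarrow> W2" "\<rho> gi \<in> W2 \<rightarrow> W1" by (fact TW, fact SW)
    show "\<And>x. norm (\<rho> g x) = norm x" "\<And>x. norm (\<rho> gi x) = norm x" using nrm gc gic by auto
    show "\<rho> gi \<in> U2 \<rightarrow> U" "\<rho> g \<in> U \<rightarrow> U2" using ST by (auto simp: U2_def)
    show "\<And>x. x \<in> W1 \<Longrightarrow> \<rho> gi (\<rho> g x) = x" "\<And>y. y \<in> W2 \<Longrightarrow> \<rho> g (\<rho> gi y) = y"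
      using ST TS by auto
    show "U \<subseteq> W1" "U2 \<subseteq> W2" by (fact UW1, fact U2W)
    show "continuous_on U f" "continuous_on U2 f" using contfD UD U2D continuous_on_subset by blast+
    show "f \<in> U \<rightarrow> W1" "f \<in> U2 \<rightarrow> W2" by (fact fU, fact fU2)
    show "\<And>y. y \<in> U2 \<Longrightarrow> \<rho> g (f (\<rho> gi y)) = f y"
      using equiv[OF gc] UD ST by (auto simp: U2_def)
    show "\<And>x. x \<in> U \<Longrightarrow> \<rho> gi (f (\<rho> g x)) = f x"
      using equiv[OF gc] UD ST by auto
    show "dim W1 = dim W2" using dim1 dim2 by simp
    show "\<exists>y\<in>U. f y = 0" using x0U by auto
    have "\<rho> g 0 = 0" using lin[OF gc] linear_0 by blast
    then show "\<exists>y\<in>U2. f y = 0" using x0U equiv[OF gc, of x0] st(1) by (auto simp: U2_def)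
  qed
  then show ?thesis by (simp add: W1_def W2_def U2_def H_def K_def)
qed

end
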